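(* For every command $C$ and every expectation $f$, \[ \mathsf{ect}[C](f) \;\le\; \mathsf{ect}[C](\mathbf{0}) + \mathsf{evt}[C](f) \] pointwise.
   Context: Let $\mathrm{Var}$ be a finite set of integer-valued variables and $\Sigma = \mathrm{Var}\to\mathbb{Z}$ the set of stores; $\sigma[x\mapsto i]$ is the store updated at $x$. Boolean expressions $\varphi$ are evaluated on stores ($\sigma\models\varphi$). A distribution expression $d$ assigns to each store $\sigma$ a probability distribution $d(\sigma)$ on $\mathbb{Z}$. Commands: $C,D ::= \mathtt{skip} \mid \mathtt{tick}(r) \mid \mathtt{halt} \mid x :\approx d \mid \mathtt{if}_{[\psi]}(\varphi)\{C\}\{D\} \mid \mathtt{while}_{[\psi]}(\varphi)\{C\} \mid C \,\square\, D \mid C \oplus_p D \mid C;D$, with $r$ a nonnegative rational, $p\in[0,1]$. Expectations are functions $f:\Sigma\to[0,\infty]$, ordered pointwise, with pointwise operations, $\mathbf{r}$ the constant $r$ (so $\mathbf{0}$ is the zero function), $[\varphi](\sigma)\in\{0,1\}$ the indicator, $[c]=1$ if $c=\mathit{true}$ and $0$ otherwise, $0\cdot\infty=0$. Transformer $\mathsf{et}_c$ for $c\in\{\mathit{true},\mathit{false}\}$: $\mathsf{et}_c[\mathtt{skip}](f)=f$; $\mathsf{et}_c[\mathtt{tick}(r)](f)=[c]\cdot\mathbf{r}+f$; $\mathsf{et}_c[\mathtt{halt}](f)=\mathbf{0}$; $\mathsf{et}_c[x:\approx d](f)=\lambda\sigma.\sum_{i} d(\sigma)(i)\, f(\sigma[x\mapsto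 i])$; $\mathsf{et}_c[\mathtt{if}_{[\psi]}(\varphi)\{C\}\{D\}](f)=[\psi\wedge\varphi]\cdot\mathsf{et}_c[C](f)+[\psi\wedge\neg\varphi]\cdot\mathsf{et}_c[D](f)$; $\mathsf{et}_c[\mathtt{while}_{[\psi]}(\varphi)\{C\}](f)=\mathrm{lfp}\,F.\ [\psi\wedge\varphi]\cdot\mathsf{et}_c[C](F)+[\psi\wedge\neg\varphi]\cdot f$ (least fixed point, pointwise order); $\mathsf{et}_c[C\,\square\,D](f)=\max(\mathsf{et}_c[C](f),\mathsf{et}_c[D](f))$; $\mathsf{et}_c[C\oplus_p D](f)=\mathbf{p}\cdot\mathsf{et}_c[C](f)+\mathbf{(1-p)}\cdot\mathsf{et}_c[D](f)$; $\mathsf{et}_c[C;D](f)=\mathsf{et}_c[C](\mathsf{et}_c[D](f))$. The expected cost transformer is $\mathsf{ect}[C]=\mathsf{et}_{\mathit{true}}[C]$ and the expected value transformer is $\mathsf{evt}[C]=\mathsf{et}_{\mathit{false}}[C]$. *)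

theory Defs
  imports "HOL-Probability.Probability_Mass_Function"
begin

type_synonym 'v store = "'v \<Rightarrow> int"
type_synonym 'v bexp = "'v store \<Rightarrow> bool"
type_synonym 'v dexp = "'v store \<Rightarrow> int pmf"
type_synonym 'v expectation = "'v store \<Rightarrow> ennreal"

datatype 'v com =
    Skip
  | Tick rat
  | Halt
  | Assign 'v "'v dexp"
  | If "'v bexp" "'v bexp" "'v com" "'v com"
  | While "'v bexp" "'v bexp" "'v com"
  | NDet "'v com" "'v com"
  | PChoice "'v com" real "'v com"
  | Seq "'v com" "'v com"

primrec wf_com :: "'v com \<Rightarrow> bool" where
  "wf_com Skip = True"
| "wf_com (Tick r) = (r \<ge> 0)"
| "wf_com Halt = True"
| "wf_com (Assign x d) = True"
| "wf_com (If \<psi> \<phi> C D) = (wf_com C \<and> wf_com D)"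
| "wf_com (While \<psi> \<phi> C) = wf_com C"
| "wf_com (NDet C D) = (wf_com C \<and> wf_com D)"
| "wf_com (PChoice C p D) = (0 \<le> p \<and> p \<le> 1 \<and> wf_com C \<and> wf_com D)"
| "wf_com (Seq C D) = (wf_com C \<and> wf_com D)"

primrec et :: "bool \<Rightarrow> 'v com \<Rightarrow> 'v expectation \<Rightarrow> 'v expectation" where
  "et c Skip f = f"
| "et c (Tick r) f = (\<lambda>\<sigma>. of_bool c * ennreal (of_rat r) + f \<sigma>)"
| "et c Halt f = (\<lambda>\<sigma>. 0)"
| "et c (Assign x d) f = (\<lambda>\<sigma>. \<integral>\<^sup>+ i. f (\<sigma>(x := i)) \<partial>measure_pmf (d \<sigma>))"
| "et c (If \<psi> \<phi> C D) f = (\<lambda>\<sigma>. of_bool (\<psi> \<sigma> \<and> \<phi> \<sigma>) * et c C f \<sigma>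
                                + of_bool (\<psi> \<sigma> \<and> \<not> \<phi> \<sigma>) * et c D f \<sigma>)"
| "et c (While \<psi> \<phi> C) f = lfp (\<lambda>F \<sigma>. of_bool (\<psi> \<sigma> \<and> \<phi> \<sigma>) * et c C F \<sigma>
                                + of_bool (\<psi> \<sigma> \<and> \<not> \<phi> \<sigma>) * f \<sigma>)"
| "et c (NDet C D) f = (\<lambda>\<sigma>. max (et c C f \<sigma>) (et c D f \<sigma>))"
| "et c (PChoice C p D) f = (\<lambda>\<sigma>. ennreal p * et c C f \<sigma> + ennreal (1 - p) * et c D f \<sigma>)"
| "et c (Seq C D) f = et c C (et c D f)"

definition ect :: "'v com \<Rightarrow> 'v expectation \<Rightarrow> 'v expectation" where
  "ect = et True"

definition evt :: "'v com \<Rightarrow> 'v expectation \<Rightarrow> 'v expectation" where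
  "evt = et False"

end

theory Submission
  imports Defs
begin

lemma mono_et: "f \<le> g \<Longrightarrow> et c C f \<le> et c C g"
proof (induction C arbitrary: f g)
  case (Assign x d)
  then show ?case by (auto simp: le_fun_def intro!: nn_integral_mono)
next
  case (If \<psi> \<phi> C D)
  then show ?case
    by (auto simp: le_fun_def intro!: add_mono mult_left_mono)
next
  case (While \<psi> \<phi> C)
  show ?case
    apply simp
    apply (rule lfp_mono)
    using While.prems by (auto simp: le_fun_def intro!: add_mono mult_left_mono)
next
  case (NDet C D)
  show ?case
  proof (rule le_funI)
    fix \<sigma>
    have "et c C f \<sigma> \<le> et c C g \<sigma>" "et c D f \<sigma> \<le> et c D g \<sigma>"
      using NDet.IH(1)[OF NDet.prems] NDet.IH(2)[OF NDet.prems] by (auto simp: le_fun_def)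
    then show "et c (NDet C D) f \<sigma> \<le> et c (NDet C D) g \<sigma>" by (auto simp del: le_max_iff_disj intro: order_trans max.cobounded1 max.cobounded2)
  qed
next
  case (PChoice C p D)
  then show ?case by (auto simp: le_fun_def intro!: add_mono mult_left_mono)
next
  case (Seq C D)
  then show ?case by simp
qed (auto simp: le_fun_def)

lemma mono_While: "mono (\<lambda>F \<sigma>. of_bool (\<psi> \<sigma> \<and> \<phi> \<sigma>) * et c C F \<sigma>
                                + of_bool (\<psi> \<sigma> \<and> \<not> \<phi> \<sigma>) * (f \<sigma> :: ennreal))"
proof (rule monoI, rule le_funI)
  fix F G :: "'a expectation" and \<sigma>
  assume "F \<le> G"
  then have "et c C F \<sigma> \<le> et c C G \<sigma>" using mono_et[of F G c C] by (auto simp: le_fun_def)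
  then show "of_bool (\<psi> \<sigma> \<and> \<phi> \<sigma>) * et c C F \<sigma> + of_bool (\<psi> \<sigma> \<and> \<not> \<phi> \<sigma>) * f \<sigma>
     \<le> of_bool (\<psi> \<sigma> \<and> \<phi> \<sigma>) * et c C G \<sigma> + of_bool (\<psi> \<sigma> \<and> \<not> \<phi> \<sigma>) * f \<sigma>"
    by (intro add_mono mult_left_mono) auto
qed

lemma main: "et True C (\<lambda>\<sigma>. g \<sigma> + h \<sigma>) \<le> (\<lambda>\<sigma>. et True C g \<sigma> + et False C h \<sigma>)"
proof (induction C arbitrary: g h)
  case (Assign x d)
  then show ?case
    by (auto simp: le_fun_def nn_integral_add)
next
  case (If \<psi> \<phi> C D)
  then show ?case
    by (auto simp: le_fun_def)
next
  case (While \<psi> \<phi> C)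
  define A where "A = et True (While \<psi> \<phi> C) g"
  define B where "B = et False (While \<psi> \<phi> C) h"
  have A: "A = (\<lambda>\<sigma>. of_bool (\<psi> \<sigma> \<and> \<phi> \<sigma>) * et True C A \<sigma> + of_bool (\<psi> \<sigma> \<and> \<not> \<phi> \<sigma>) * g \<sigma>)"
    unfolding A_def et.simps by (rule lfp_unfold[OF mono_While])
  have B: "B = (\<lambda>\<sigma>. of_bool (\<psi> \<sigma> \<and> \<phi> \<sigma>) * et False C B \<sigma> + of_bool (\<psi> \<sigma> \<and> \<not> \<phi> \<sigma>) * h \<sigma>)"
    unfolding B_def et.simps by (rule lfp_unfold[OF mono_While])
  have "et True (While \<psi> \<phi> C) (\<lambda>\<sigma>. g \<sigma> + h \<sigma>) \<le> (\<lambda>\<sigma>. A \<sigma> + B \<sigma>)"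
    unfolding et.simps
  proof (rule lfp_lowerbound)
    show "(\<lambda>\<sigma>. of_bool (\<psi> \<sigma> \<and> \<phi> \<sigma>) * et True C (\<lambda>\<sigma>. A \<sigma> + B \<sigma>) \<sigma> +
          of_bool (\<psi> \<sigma> \<and> \<not> \<phi> \<sigma>) * (g \<sigma> + h \<sigma>)) \<le> (\<lambda>\<sigma>. A \<sigma> + B \<sigma>)"
    proof (rule le_funI)
      fix \<sigma>
      have "et True C (\<lambda>\<sigma>. A \<sigma> + B \<sigma>) \<sigma> \<le> et True C A \<sigma> + et False C B \<sigma>"
        using While.IH[of A B] by (auto simp: le_fun_def)
      then have "of_bool (\<psi> \<sigma> \<and> \<phi> \<sigma>) * et True C (\<lambda>\<sigma>. A \<sigma> + B \<sigma>) \<sigma> +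
          of_bool (\<psi> \<sigma> \<and> \<not> \<phi> \<sigma>) * (g \<sigma> + h \<sigma>) \<le>
          (of_bool (\<psi> \<sigma> \<and> \<phi> \<sigma>) * et True C A \<sigma> + of_bool (\<psi> \<sigma> \<and> \<not> \<phi> \<sigma>) * g \<sigma>)
          + (of_bool (\<psi> \<sigma> \<and> \<phi> \<sigma>) * et False C B \<sigma> + of_bool (\<psi> \<sigma> \<and> \<not> \<phi> \<sigma>) * h \<sigma>)"
        by (auto simp: algebra_simps)
      also have "\<dots> = A \<sigma> + B \<sigma>"
        using fun_cong[OF A, of \<sigma>] fun_cong[OF B, of \<sigma>] by simp
      finally show "of_bool (\<psi> \<sigma> \<and> \<phi> \<sigma>) * et True C (\<lambda>\<sigma>. A \<sigma> + B \<sigma>) \<sigma> +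
          of_bool (\<psi> \<sigma> \<and> \<not> \<phi> \<sigma>) * (g \<sigma> + h \<sigma>) \<le> A \<sigma> + B \<sigma>" .
    qed
  qed
  then show ?case by (simp add: A_def B_def)
next
  case (NDet C D)
  show ?case
  proof (rule le_funI)
    fix \<sigma>
    have 1: "et True C (\<lambda>\<sigma>. g \<sigma> + h \<sigma>) \<sigma> \<le> et True C g \<sigma> + et False C h \<sigma>"
      and 2: "et True D (\<lambda>\<sigma>. g \<sigma> + h \<sigma>) \<sigma> \<le> et True D g \<sigma> + et False D h \<sigma>"
      using NDet.IH(1)[of g h] NDet.IH(2)[of g h] by (auto simp: le_fun_def)
    have "et True C g \<sigma> + et False C h \<sigma> \<le> max (et True C g \<sigma>) (et True D g \<sigma>) + max (et False C h \<sigma>) (et False D h \<sigma>)"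
      "et True D g \<sigma> + et False D h \<sigma> \<le> max (et True C g \<sigma>) (et True D g \<sigma>) + max (et False C h \<sigma>) (et False D h \<sigma>)"
      by (intro add_mono; simp)+
    with 1 2 show "et True (NDet C D) (\<lambda>\<sigma>. g \<sigma> + h \<sigma>) \<sigma> \<le> et True (NDet C D) g \<sigma> + et False (NDet C D) h \<sigma>"
      by (auto intro: order_trans)
  qed
next
  case (PChoice C p D)
  show ?case
  proof (rule le_funI)
    fix \<sigma>
    have 1: "et True C (\<lambda>\<sigma>. g \<sigma> + h \<sigma>) \<sigma> \<le> et True C g \<sigma> + et False C h \<sigma>"
      and 2: "et True D (\<lambda>\<sigma>. g \<sigma> + h \<sigma>) \<sigma> \<le> et True D g \<sigma> + et False D h \<sigma>"
      using PChoice.IH(1)[of g h] PChoice.IH(2)[of g h] by (auto simp: le_fun_def)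
    have "ennreal p * et True C (\<lambda>\<sigma>. g \<sigma> + h \<sigma>) \<sigma> + ennreal (1 - p) * et True D (\<lambda>\<sigma>. g \<sigma> + h \<sigma>) \<sigma>
      \<le> ennreal p * (et True C g \<sigma> + et False C h \<sigma>) + ennreal (1 - p) * (et True D g \<sigma> + et False D h \<sigma>)"
      using 1 2 by (intro add_mono mult_left_mono) auto
    then show "et True (PChoice C p D) (\<lambda>\<sigma>. g \<sigma> + h \<sigma>) \<sigma> \<le> et True (PChoice C p D) g \<sigma> + et False (PChoice C p D) h \<sigma>"
      by (simp add: algebra_simps)
  qed
next
  case (Seq C D)
  show ?case
    apply simp
    apply (rule order_trans[OF mono_et[OF Seq.IH(2)]])
    apply (rule Seq.IH(1))
    done
qed (auto simp: le_fun_def)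

theorem mainTheorem7:
  fixes C :: "('v::finite) com" and f :: "'v expectation"
  assumes "wf_com C"
  shows "ect C f \<le> (\<lambda>\<sigma>. ect C (\<lambda>_. 0) \<sigma> + evt C f \<sigma>)"
  using main[of C "\<lambda>_. 0" f] by (simp add: ect_def evt_def)

end
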